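(* Let $G=\langle A\cup B\rangle$ be a CS group with periodic rooted group $A$, and assume that either (i) $A$ has finite exponent, or (ii) the directed group $B$ has finite support. Let $T\subseteq G$ be a set of elements of finite order. Suppose that for every $g\in G\setminus A$ there is some $m\in\mathbb N$ such that for all $v\in X^m$ (for which $\ell_g(v)$ is then finite) we have $\mathrm{syl}(g\|_v)<\mathrm{syl}(g)$ or $g\|_v\in T$. Then $G$ is periodic.
   Context: Let $X$ be a nonempty set (possibly infinite) with a distinguished letter $0\in X$, and $\dot X=X\setminus\{0\}$. $X^*$ is the free monoid on $X$ (concatenation $u\star v$), viewed as a regular rooted tree with layers $X^n$. $\mathrm{Aut}(X^* )$ is the group of root-fixing tree automorphisms, acting on the right ($gh$ = first $g$ then $h$); ${}^hg=hgh^{-1}$. The section $g|_u$ is defined by $(u\star v).g=u.g\star v.(g|_u)$; elements of $\mathrm{Sym}(X)$ are identified with rooted automorphisms $(x\star v).\rho=x.\rho\star v$; $\mathrm{St}(1)$ is the stabiliser of all vertices of $X^1$. For a vertex $v$, $\ell_g(v)$ is the length of its $\langle g\rangle$-orbit; if finite, $g\|_v:=g^{\ell_g(v)}|_v$. A constant spinal (CS) group is $G=\langle A\cup B\rangle$ with $A\le\mathrm{Sym}(X)$ transitive (rooted group) and $B\le\mathrm{St}(1)$ (directed group) such that $b|_0=b$ for all $b\in B$ and the elements $b|_x$ ($b\in B$, $x\in\dot X$) lie in $A$ and generate $A$. $B$ has finite support if each $b\in B$ has $b|_x=\mathrm{id}$ for all but finitely many $x$. Every $g\in G$ is a product $({}^{a_0}b_0)\cdots({}^{a_{n-1}}b_{n-1})a_n$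 ($a_i\in A$, $b_i\in B$); $\mathrm{syl}(g)$ is the least such $n$. A group is periodic if every element has finite order. *)

theory Defs
  imports "HOL-Algebra.Algebra"
begin

text \<open>Vertices of the tree X^* are lists over the alphabet type 'x; the empty list is the root,
  concatenation is the monoid operation. We apply automorphisms as functions, so "v.g" is "g v"; the
  product gh (first g, then h) is the composition h o g.\<close>

definition tree_aut :: "('x list \<Rightarrow> 'x list) set" where
  "tree_aut = {g. bij g \<and> (\<forall>w. length (g w) = length w) \<and>
                  (\<forall>u v. take (length u) (g (u @ v)) = g u)}"

definition AutT :: "('x list \<Rightarrow> 'x list) monoid" where
  "AutT = \<lparr>carrier = tree_aut, monoid.mult = (\<lambda>g h. h \<circ> g), one = id\<rparr>"

text \<open>Section g|_u, defined by (u v).g = (u.g)(v.(g|_u)).\<close>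
definition sect :: "('x list \<Rightarrow> 'x list) \<Rightarrow> 'x list \<Rightarrow> ('x list \<Rightarrow> 'x list)" where
  "sect g u = (\<lambda>v. drop (length u) (g (u @ v)))"

definition rooted :: "('x \<Rightarrow> 'x) \<Rightarrow> ('x list \<Rightarrow> 'x list)" where
  "rooted \<rho> = (\<lambda>w. case w of [] \<Rightarrow> [] | x # v \<Rightarrow> \<rho> x # v)"

definition St1 :: "('x list \<Rightarrow> 'x list) set" where
  "St1 = {g \<in> tree_aut. \<forall>x. g [x] = [x]}"

text \<open>Constant spinal group data: rooted group A, directed group B, distinguished letter z (= 0).\<close>
definition CS_data :: "'x \<Rightarrow> ('x list \<Rightarrow> 'x list) set \<Rightarrow> ('x list \<Rightarrow> 'x list) set \<Rightarrow> bool" where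
  "CS_data z A B \<longleftrightarrow>
     subgroup A AutT \<and> (\<forall>a\<in>A. \<exists>\<rho>. bij \<rho> \<and> a = rooted \<rho>) \<and>
     (\<forall>x y. \<exists>a\<in>A. a [x] = [y]) \<and>
     subgroup B AutT \<and> B \<subseteq> St1 \<and>
     (\<forall>b\<in>B. sect b [z] = b) \<and>
     (\<forall>b\<in>B. \<forall>x. x \<noteq> z \<longrightarrow> sect b [x] \<in> A) \<and>
     generate AutT {sect b [x] | b x. b \<in> B \<and> x \<noteq> z} = A"

definition CS_group :: "('x list \<Rightarrow> 'x list) set \<Rightarrow> ('x list \<Rightarrow> 'x list) set \<Rightarrow> ('x list \<Rightarrow> 'x list) set" where
  "CS_group A B = generate AutT (A \<union> B)"

definition finite_order :: "('x list \<Rightarrow> 'x list) \<Rightarrow> bool" where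
  "finite_order g \<longleftrightarrow> (\<exists>n::nat. n > 0 \<and> g [^]\<^bsub>AutT\<^esub> n = \<one>\<^bsub>AutT\<^esub>)"

definition periodic :: "('x list \<Rightarrow> 'x list) set \<Rightarrow> bool" where
  "periodic H \<longleftrightarrow> (\<forall>g\<in>H. finite_order g)"

definition finite_exponent :: "('x list \<Rightarrow> 'x list) set \<Rightarrow> bool" where
  "finite_exponent H \<longleftrightarrow> (\<exists>n::nat. n > 0 \<and> (\<forall>g\<in>H. g [^]\<^bsub>AutT\<^esub> n = \<one>\<^bsub>AutT\<^esub>))"

definition finite_support :: "'x \<Rightarrow> ('x list \<Rightarrow> 'x list) set \<Rightarrow> bool" where
  "finite_support z B \<longleftrightarrow> (\<forall>b\<in>B. finite {x. sect b [x] \<noteq> id})"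

definition conjT :: "('x list \<Rightarrow> 'x list) \<Rightarrow> ('x list \<Rightarrow> 'x list) \<Rightarrow> ('x list \<Rightarrow> 'x list)" where
  "conjT h g = h \<otimes>\<^bsub>AutT\<^esub> g \<otimes>\<^bsub>AutT\<^esub> inv\<^bsub>AutT\<^esub> h"

definition prodT :: "('x list \<Rightarrow> 'x list) list \<Rightarrow> ('x list \<Rightarrow> 'x list)" where
  "prodT gs = foldr (\<lambda>g acc. g \<otimes>\<^bsub>AutT\<^esub> acc) gs \<one>\<^bsub>AutT\<^esub>"

definition syl :: "('x list \<Rightarrow> 'x list) set \<Rightarrow> ('x list \<Rightarrow> 'x list) set \<Rightarrow> ('x list \<Rightarrow> 'x list) \<Rightarrow> nat" where
  "syl A B g = (LEAST n. \<exists>as bs a. length as = n \<and> length bs = n \<and> set as \<subseteq> A \<and> set bs \<subseteq> B \<and>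
        a \<in> A \<and> g = prodT (map (\<lambda>(a', b'). conjT a' b') (zip as bs)) \<otimes>\<^bsub>AutT\<^esub> a)"

definition orbitT :: "('x list \<Rightarrow> 'x list) \<Rightarrow> 'x list \<Rightarrow> 'x list set" where
  "orbitT g v = {(g [^]\<^bsub>AutT\<^esub> (k::int)) v | k. True}"

definition orbit_len :: "('x list \<Rightarrow> 'x list) \<Rightarrow> 'x list \<Rightarrow> nat" where
  "orbit_len g v = card (orbitT g v)"

definition first_return_section :: "('x list \<Rightarrow> 'x list) \<Rightarrow> 'x list \<Rightarrow> ('x list \<Rightarrow> 'x list)" where
  "first_return_section g v = sect (g [^]\<^bsub>AutT\<^esub> (orbit_len g v)) v"

end

theory Submission
  imports Defs
begin



lemma ta_len: "g \<in> tree_aut \<Longrightarrow> length (g w) = length w"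
  by (simp add: tree_aut_def)
lemma ta_take: "g \<in> tree_aut \<Longrightarrow> take (length u) (g (u@v)) = g u"
  by (simp add: tree_aut_def)
lemma ta_bij: "g \<in> tree_aut \<Longrightarrow> bij g"
  by (simp add: tree_aut_def)
lemma ta_app: "g \<in> tree_aut \<Longrightarrow> g (u@v) = g u @ sect g u v"
  unfolding sect_def by (metis append_take_drop_id ta_take ta_len)

lemma ta_id: "id \<in> tree_aut"
  by (simp add: tree_aut_def)

lemma ta_comp: assumes "g \<in> tree_aut" "h \<in> tree_aut" shows "h \<circ> g \<in> tree_aut"
proof -
  have "take (length u) (h (g (u @ v))) = h (g u)" for u v
  proof -
    have "h (g (u@v)) = h (g u) @ sect h (g u) (sect g u v)"
      using assms ta_app by metis
    moreover have "length (h (g u)) = length u" using assms ta_len by metis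
    ultimately show ?thesis by simp
  qed
  thus ?thesis using assms unfolding tree_aut_def by (auto intro: bij_comp)
qed

lemma ta_inv: assumes "g \<in> tree_aut" shows "inv_into UNIV g \<in> tree_aut"
proof -
  have b: "bij g" using assms ta_bij by blast
  have L: "length (inv_into UNIV g w) = length w" for w
    by (metis assms b bij_inv_eq_iff ta_len)
  have "take (length u) (inv_into UNIV g (u @ v)) = inv_into UNIV g u" for u v
  proof -
    define w where "w = inv_into UNIV g (u@v)"
    have gw: "g w = u @ v" unfolding w_def by (meson b bij_inv_eq_iff)
    have lw: "length w = length u + length v" using L w_def by simp
    have "take (length (take (length u) w)) (g (take (length u) w @ drop (length u) w)) = g (take (length u) w)"
      using ta_take[OF assms] by blast
    hence "u = g (take (length u) w)" using gw lw by simp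
    thus ?thesis unfolding w_def[symmetric] by (metis b bij_inv_eq_iff)
  qed
  thus ?thesis using L b unfolding tree_aut_def by (auto intro: bij_imp_bij_inv)
qed

lemma carrier_AutT[simp]: "carrier AutT = tree_aut" by (simp add: AutT_def)
lemma mult_AutT[simp]: "g \<otimes>\<^bsub>AutT\<^esub> h = h \<circ> g" by (simp add: AutT_def)
lemma one_AutT[simp]: "\<one>\<^bsub>AutT\<^esub> = id" by (simp add: AutT_def)

lemma group_AutT: "group AutT"
proof (rule groupI)
  fix x assume x: "x \<in> carrier AutT"
  show "\<exists>y\<in>carrier AutT. y \<otimes>\<^bsub>AutT\<^esub> x = \<one>\<^bsub>AutT\<^esub>"
  proof (intro bexI[of _ "inv_into UNIV x"])
    have "x \<circ> inv_into UNIV x = id"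
      using x ta_bij[of x] by (auto simp: fun_eq_iff bij_is_surj surj_f_inv_f)
    thus "inv_into UNIV x \<otimes>\<^bsub>AutT\<^esub> x = \<one>\<^bsub>AutT\<^esub>" by simp
    show "inv_into UNIV x \<in> carrier AutT" using x ta_inv by simp
  qed
qed (auto simp: ta_comp ta_id comp_assoc)

lemma inv_AutT: assumes "g \<in> tree_aut" shows "inv\<^bsub>AutT\<^esub> g = inv_into UNIV g"
proof -
  have "g \<circ> inv_into UNIV g = id"
    using assms ta_bij[of g] by (auto simp: fun_eq_iff bij_is_surj surj_f_inv_f)
  thus ?thesis using group.inv_equality[OF group_AutT, of "inv_into UNIV g" g] assms ta_inv[OF assms]
    by simp
qed

lemma pow_AutT: "g [^]\<^bsub>AutT\<^esub> (n::nat) = g ^^ n"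
  by (induction n) (simp_all add: nat_pow_def funpow_Suc_right[symmetric])




lemma sect_Nil[simp]: "sect g [] = g" by (simp add: sect_def)
lemma sect_sect: "sect (sect g u) w = sect g (u@w)"
  by (simp add: sect_def fun_eq_iff add.commute)
lemma sect_id[simp]: "sect id u = id" by (simp add: sect_def fun_eq_iff)

lemma sect_ta: assumes g: "g \<in> tree_aut" shows "sect g u \<in> tree_aut"
proof -
  have L: "length (sect g u v) = length v" for v
    using ta_len[OF g, of "u@v"] by (simp add: sect_def)
  have T: "take (length w) (sect g u (w@v)) = sect g u w" for w v
  proof -
    have "g (u@w@v) = g (u@w) @ sect g (u@w) v" using ta_app[OF g, of "u@w" v] by simp
    also have "g (u@w) = g u @ sect g u w" using ta_app[OF g] by blast
    finally have eq: "g (u@(w@v)) = g u @ (sect g u w @ sect g (u@w) v)" by simp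
    have "sect g u (w@v) = drop (length u) (g (u@(w@v)))" by (simp add: sect_def)
    also have "\<dots> = sect g u w @ sect g (u@w) v" unfolding eq using ta_len[OF g, of u] by simp
    finally have "sect g u (w@v) = sect g u w @ sect g (u@w) v" .
    thus ?thesis using L by simp
  qed
  have b: "bij g" using g ta_bij by blast
  have inj: "inj (sect g u)"
  proof (rule injI)
    fix v1 v2 assume "sect g u v1 = sect g u v2"
    hence "g (u@v1) = g (u@v2)" using ta_app[OF g] by metis
    thus "v1 = v2" using b by (simp add: bij_is_inj inj_eq)
  qed
  have surj: "surj (sect g u)"
  proof -
    have "w \<in> range (sect g u)" for w
    proof -
      define y where "y = inv_into UNIV g (g u @ w)"
      have gy: "g y = g u @ w" unfolding y_def by (meson b bij_inv_eq_iff)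
      have "take (length (g u)) y = inv_into UNIV g (g u)"
        using ta_take[OF ta_inv[OF g], of "g u" w] y_def by simp
      hence "take (length u) y = u" using ta_len[OF g] b by (simp add: bij_is_inj)
      hence yy: "y = u @ drop (length u) y" by (metis append_take_drop_id)
      have "sect g u (drop (length u) y) = w"
        using gy ta_len[OF g, of u] unfolding sect_def by (simp flip: yy)
      thus ?thesis by (metis rangeI)
    qed
    thus ?thesis by blast
  qed
  show ?thesis using L T inj surj unfolding tree_aut_def by (simp add: bij_def)
qed

lemma sect_comp: assumes "g \<in> tree_aut" "h \<in> tree_aut"
  shows "sect (h \<circ> g) u = sect h (g u) \<circ> sect g u"
proof -
  have "sect (h \<circ> g) u v = sect h (g u) (sect g u v)" for v
  proof -
    have "h (g (u@v)) = h (g u) @ sect h (g u) (sect g u v)" using assms ta_app by metis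
    moreover have "length (h (g u)) = length u" using assms ta_len by metis
    ultimately show ?thesis unfolding sect_def[of "h \<circ> g"] by simp
  qed
  thus ?thesis by (simp add: fun_eq_iff)
qed

lemma ta_funpow: "g \<in> tree_aut \<Longrightarrow> g ^^ n \<in> tree_aut"
  by (induction n) (simp_all add: ta_id ta_comp)

lemma funpow_fix: "f x = x \<Longrightarrow> (f ^^ n) x = x"
  by (induction n) simp_all

lemma sect_fix_pow: assumes g: "g \<in> tree_aut" and u: "g u = u"
  shows "sect (g ^^ n) u = (sect g u) ^^ n"
proof (induction n)
  case (Suc n)
  have "sect (g ^^ Suc n) u = sect (g \<circ> g^^n) u" by simp
  also have "\<dots> = sect g ((g^^n) u) \<circ> sect (g^^n) u" using sect_comp g ta_funpow by blast
  also have "\<dots> = sect g u ^^ Suc n" using Suc funpow_fix[of g u, OF u] by (simp add: funpow_Suc_right)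
  finally show ?case .
qed (simp add: sect_def fun_eq_iff)

lemma fix_pow_app: assumes g: "g \<in> tree_aut" and u: "g u = u"
  shows "(g ^^ n) (u @ w) = u @ (sect g u ^^ n) w"
  using ta_app[OF ta_funpow[OF g], of n u w] sect_fix_pow[OF g u] funpow_fix[of g u, OF u] by simp

lemma sect_inv: assumes g: "g \<in> tree_aut"
  shows "sect (inv_into UNIV g) u = inv_into UNIV (sect g (inv_into UNIV g u))"
proof -
  have b: "bij g" using g ta_bij by blast
  have gi: "g \<circ> inv_into UNIV g = id" using b by (auto simp: fun_eq_iff bij_is_surj surj_f_inv_f)
  have "sect g (inv_into UNIV g u) \<circ> sect (inv_into UNIV g) u = id"
    using sect_comp[OF ta_inv[OF g] g, of u] gi by simp
  moreover have "bij (sect g (inv_into UNIV g u))" using sect_ta[OF g] ta_bij by blast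
  ultimately show ?thesis
  proof -
    let ?f = "sect g (inv_into UNIV g u)" and ?h = "sect (inv_into UNIV g) u"
    assume fh: "?f \<circ> ?h = id" and bf: "bij ?f"
    have "inv_into UNIV ?f \<circ> ?f = id" using bf by (simp add: bij_is_inj)
    hence "?h = (inv_into UNIV ?f \<circ> ?f) \<circ> ?h" by simp
    thus ?thesis using fh by (simp add: comp_assoc)
  qed
qed

lemma rooted_sect: "sect (rooted \<rho>) (x#u) = id"
  by (simp add: sect_def rooted_def fun_eq_iff)
lemma rooted_single: "rooted \<rho> [x] = [\<rho> x]"
  by (simp add: rooted_def)

lemma single_len: "g \<in> tree_aut \<Longrightarrow> \<exists>y. g [x] = [y]"
  using ta_len[of g "[x]"] by (cases "g [x]") auto




locale cs =
  fixes z :: 'x and A B :: "('x list \<Rightarrow> 'x list) set"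
  assumes cs: "CS_data z A B"
begin

abbreviation "G \<equiv> CS_group A B"

lemma lam_id: "(\<lambda>a. a) = id" by (simp add: id_def)

lemma subA: "subgroup A AutT" using cs by (simp add: CS_data_def)
lemma subB: "subgroup B AutT" using cs by (simp add: CS_data_def)
lemma A_ta: "a \<in> A \<Longrightarrow> a \<in> tree_aut" using subgroup.subset[OF subA] by auto
lemma B_ta: "b \<in> B \<Longrightarrow> b \<in> tree_aut" using subgroup.subset[OF subB] by auto
lemma B_St1: "b \<in> B \<Longrightarrow> b [x] = [x]" using cs by (auto simp: CS_data_def St1_def)
lemma B_z: "b \<in> B \<Longrightarrow> sect b [z] = b" using cs by (auto simp: CS_data_def)
lemma B_x: "b \<in> B \<Longrightarrow> x \<noteq> z \<Longrightarrow> sect b [x] \<in> A" using cs by (auto simp: CS_data_def)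
lemma A_rooted: "a \<in> A \<Longrightarrow> \<exists>\<rho>. a = rooted \<rho>" using cs by (auto simp: CS_data_def)
lemma id_A: "id \<in> A" using subgroup.one_closed[OF subA] by simp
lemma A_sect: "a \<in> A \<Longrightarrow> u \<noteq> [] \<Longrightarrow> sect a u = id"
  using A_rooted rooted_sect by (metis list.exhaust)
lemma A_sect': "a \<in> A \<Longrightarrow> sect a u \<in> A"
  using A_sect id_A by (cases u) auto

lemma B_sect: assumes b: "b \<in> B"
  shows "(u = replicate (length u) z \<longrightarrow> sect b u = b) \<and> (sect b u \<in> A \<or> u = replicate (length u) z)"
proof (induction u)
  case (Cons x u)
  have e: "sect b (x#u) = sect (sect b [x]) u" using sect_sect[of b "[x]" u] by simp
  show ?case
  proof (cases "x = z")
    case True thus ?thesis using e B_z[OF b] Cons by auto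
  next
    case False thus ?thesis using e B_x[OF b False] A_sect' by auto
  qed
qed simp

lemma B_sect_fs: assumes b: "b \<in> B"
  shows "sect b v \<noteq> id \<Longrightarrow> v = [] \<or> (\<exists>k x. v = replicate k z @ [x] \<and> sect b [x] \<noteq> id)"
proof (induction v)
  case (Cons y u)
  have e: "sect b (y#u) = sect (sect b [y]) u" using sect_sect[of b "[y]" u] by simp
  show ?case
  proof (cases "y = z")
    case True
    hence "sect b u \<noteq> id" using e B_z[OF b] Cons.prems by metis
    with Cons.IH have "u = [] \<or> (\<exists>k x. u = replicate k z @ [x] \<and> sect b [x] \<noteq> id)" by blast
    thus ?thesis
    proof
      assume "u = []" thus ?thesis using Cons.prems True by (auto intro: exI[of _ 0])
    next
      assume "\<exists>k x. u = replicate k z @ [x] \<and> sect b [x] \<noteq> id"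
      then obtain k x where "u = replicate k z @ [x]" "sect b [x] \<noteq> id" by blast
      thus ?thesis using True by (auto intro!: exI[of _ "Suc k"])
    qed
  next
    case False
    have "u = []" using e A_sect[OF B_x[OF b False]] Cons.prems by auto
    thus ?thesis using Cons.prems by (auto intro: exI[of _ 0])
  qed
qed simp

lemma AB_ta: "A \<union> B \<subseteq> carrier AutT" using A_ta B_ta by auto
lemma G_sub: "subgroup G AutT"
  unfolding CS_group_def using group.generate_is_subgroup[OF group_AutT AB_ta] .
lemma G_ta: "g \<in> G \<Longrightarrow> g \<in> tree_aut" using subgroup.subset[OF G_sub] by auto
lemma G_mult: "g \<in> G \<Longrightarrow> h \<in> G \<Longrightarrow> h \<circ> g \<in> G"
  using subgroup.m_closed[OF G_sub] by fastforce
lemma G_inv: "g \<in> G \<Longrightarrow> inv_into UNIV g \<in> G"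
  using subgroup.m_inv_closed[OF G_sub] inv_AutT G_ta by fastforce
lemma G_id: "id \<in> G" using subgroup.one_closed[OF G_sub] by simp
lemma G_pow: "g \<in> G \<Longrightarrow> g ^^ n \<in> G"
  by (induction n) (simp_all add: G_id G_mult lam_id)
lemma A_G: "A \<subseteq> G" unfolding CS_group_def by (auto intro: generate.incl)
lemma B_G: "B \<subseteq> G" unfolding CS_group_def by (auto intro: generate.incl)

lemma AB_sect_G: assumes "h \<in> A \<union> B" shows "sect h w \<in> G"
  using assms
proof
  assume "h \<in> A" thus ?thesis using A_sect' A_G by blast
next
  assume h: "h \<in> B"
  have "sect h w \<in> A \<or> sect h w = h" using B_sect[OF h, of w] by blast
  thus ?thesis using A_G B_G h by auto
qed

lemma sect_G: assumes "g \<in> G" shows "sect g u \<in> G"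
  using assms[unfolded CS_group_def]
proof (induction arbitrary: u rule: generate.induct)
  case one thus ?case using G_id by (simp add: lam_id)
next
  case (incl h) thus ?case using AB_sect_G by blast
next
  case (inv h)
  have ht: "h \<in> tree_aut" using inv A_ta B_ta by blast
  have hi: "inv\<^bsub>AutT\<^esub> h = inv_into UNIV h" using inv_AutT ht by blast
  have "sect h (inv_into UNIV h u) \<in> G" using inv AB_sect_G by blast
  hence "inv_into UNIV (sect h (inv_into UNIV h u)) \<in> G" by (rule G_inv)
  thus ?case unfolding hi sect_inv[OF ht] .
next
  case (eng h1 h2)
  have t: "h1 \<in> tree_aut" "h2 \<in> tree_aut" using eng(1,2) G_ta unfolding CS_group_def by auto
  have "sect h1 u \<in> G" "sect h2 (h1 u) \<in> G" using eng(3,4) unfolding CS_group_def by auto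
  hence "sect h2 (h1 u) \<circ> sect h1 u \<in> G" using G_mult by blast
  hence "sect (h2 \<circ> h1) u \<in> G" unfolding sect_comp[OF t] .
  thus ?case unfolding mult_AutT CS_group_def .
qed

lemma level1: assumes "g \<in> G" shows "\<exists>a\<in>A. \<forall>x. g [x] = a [x]"
  using assms[unfolded CS_group_def]
proof (induction rule: generate.induct)
  case one thus ?case using id_A by (auto simp: lam_id)
next
  case (incl h) thus ?case
  proof
    assume "h \<in> A" thus ?thesis by auto
  next
    assume "h \<in> B" thus ?thesis using id_A B_St1 by (intro bexI[of _ id]) auto
  qed
next
  case (inv h)
  have ht: "h \<in> tree_aut" using inv A_ta B_ta by blast
  have hi: "inv\<^bsub>AutT\<^esub> h = inv_into UNIV h" using inv_AutT ht by blast
  show ?case using inv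
  proof
    assume "h \<in> A" thus ?thesis using hi subgroup.m_inv_closed[OF subA] by force
  next
    assume h: "h \<in> B"
    have "inv_into UNIV h [x] = [x]" for x
      using B_St1[OF h, of x] ta_bij[OF ht] by (metis bij_is_inj inv_f_eq)
    thus ?thesis using hi id_A by (intro bexI[of _ id]) auto
  qed
next
  case (eng h1 h2)
  then obtain a1 a2 where a: "a1 \<in> A" "a2 \<in> A" "\<forall>x. h1 [x] = a1 [x]" "\<forall>x. h2 [x] = a2 [x]" by blast
  have "(h2 \<circ> h1) [x] = (a2 \<circ> a1) [x]" for x
    using single_len[OF A_ta[OF a(1)], of x] a by auto
  moreover have "a2 \<circ> a1 \<in> A" using subgroup.m_closed[OF subA] a by fastforce
  ultimately show ?case by (intro bexI[of _ "a2 \<circ> a1"]) auto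
qed

end



definition Eset where "Eset H g m = {v. length v = m \<and> sect g v \<notin> H}"

lemma H_comp: "subgroup H AutT \<Longrightarrow> a \<in> H \<Longrightarrow> b \<in> H \<Longrightarrow> b \<circ> a \<in> H"
  using subgroup.m_closed by fastforce
lemma H_ta: "subgroup H AutT \<Longrightarrow> a \<in> H \<Longrightarrow> a \<in> tree_aut"
  using subgroup.subset by fastforce
lemma H_inv: "subgroup H AutT \<Longrightarrow> a \<in> H \<Longrightarrow> inv_into UNIV a \<in> H"
  using subgroup.m_inv_closed[of H AutT a] inv_AutT H_ta by fastforce
lemma H_id: "subgroup H AutT \<Longrightarrow> id \<in> H"
  using subgroup.one_closed by fastforce

lemma E_inv: assumes H: "subgroup H AutT" and g: "g \<in> tree_aut"
  shows "Eset H (inv_into UNIV g) m \<subseteq> g ` Eset H g m"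
proof
  fix v assume v: "v \<in> Eset H (inv_into UNIV g) m"
  define w where "w = inv_into UNIV g v"
  have b: "bij g" using g ta_bij by blast
  have gw: "g w = v" unfolding w_def by (meson b bij_inv_eq_iff)
  have lw: "length w = m" using v ta_len[OF g, of w] gw by (simp add: Eset_def)
  have "sect g w \<notin> H"
  proof
    assume "sect g w \<in> H"
    hence "inv_into UNIV (sect g w) \<in> H" using H_inv[OF H] by blast
    thus False using v sect_inv[OF g, of v] unfolding Eset_def w_def by simp
  qed
  thus "v \<in> g ` Eset H g m" using gw lw unfolding Eset_def by blast
qed

lemma E_comp: assumes H: "subgroup H AutT" and g: "g \<in> tree_aut" and h: "h \<in> tree_aut"
  shows "Eset H (h \<circ> g) m \<subseteq> Eset H g m \<union> inv_into UNIV g ` Eset H h m"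
proof
  fix v assume v: "v \<in> Eset H (h \<circ> g) m"
  have b: "bij g" using g ta_bij by blast
  show "v \<in> Eset H g m \<union> inv_into UNIV g ` Eset H h m"
  proof (cases "sect g v \<in> H")
    case True
    have "sect h (g v) \<notin> H"
      using v True H_comp[OF H] sect_comp[OF g h, of v] unfolding Eset_def by auto
    moreover have "length (g v) = m" using v ta_len[OF g] by (simp add: Eset_def)
    moreover have "v = inv_into UNIV g (g v)" using b by (simp add: bij_is_inj)
    ultimately show ?thesis unfolding Eset_def by blast
  next
    case False thus ?thesis using v unfolding Eset_def by auto
  qed
qed

context cs begin

lemma good_closed:
  assumes H: "subgroup H AutT" and genB: "\<forall>b\<in>B. \<forall>m. finite (Eset H b m)"
    and g: "g \<in> G"
  shows "finite (Eset H g m)"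
proof -
  have gen: "finite (Eset H h m)" if h: "h \<in> A \<union> B" for h
    using h
  proof
    assume a: "h \<in> A"
    have "\<forall>u. u \<noteq> [] \<longrightarrow> sect h u \<in> H" using A_sect[OF a] H_id[OF H] by auto
    hence "Eset H h m \<subseteq> {[]}" unfolding Eset_def by blast
    thus ?thesis using finite_subset by blast
  next
    assume "h \<in> B" thus ?thesis using genB by blast
  qed
  show ?thesis using g[unfolded CS_group_def]
  proof (induction rule: generate.induct)
    case one
    have "Eset H id m = {}" using H_id[OF H] by (simp add: Eset_def)
    thus ?case by (simp add: lam_id)
  next
    case (incl h) thus ?case using gen by blast
  next
    case (inv h)
    have ht: "h \<in> tree_aut" using inv A_ta B_ta by blast
    have hi: "inv\<^bsub>AutT\<^esub> h = inv_into UNIV h" using inv_AutT ht by blast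
    have "finite (h ` Eset H h m)" using gen[OF inv] by simp
    hence "finite (Eset H (inv_into UNIV h) m)" using E_inv[OF H ht, of m] finite_subset by blast
    thus ?case unfolding hi .
  next
    case (eng h1 h2)
    have t: "h1 \<in> tree_aut" "h2 \<in> tree_aut" using eng(1,2) G_ta unfolding CS_group_def by auto
    have "finite (Eset H h1 m \<union> inv_into UNIV h1 ` Eset H h2 m)" using eng(3,4) by simp
    hence "finite (Eset H (h2 \<circ> h1) m)" using E_comp[OF H t, of m] finite_subset by blast
    thus ?case unfolding mult_AutT .
  qed
qed

lemma powG_level1: assumes g: "g \<in> G" and a: "a \<in> A" and ga: "\<forall>x. g [x] = a [x]"
  shows "(g ^^ n) [x] = (a ^^ n) [x]"
proof (induction n)
  case (Suc n)
  obtain y where y: "(a^^n) [x] = [y]" using single_len[OF ta_funpow[OF A_ta[OF a]]] by blast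
  show ?case using Suc y ga by simp
qed simp

lemma step1:
  assumes H: "subgroup H AutT" and e: "e > 0" and expH: "\<forall>h\<in>H. h ^^ e = id"
    and fin: "\<forall>g\<in>G. \<forall>m. finite (Eset H g m)"
    and perA: "\<forall>a\<in>A. \<exists>p>0. a ^^ p = id"
  shows "\<forall>g\<in>G. \<exists>N>0. \<forall>v. length v \<le> m \<longrightarrow> (g ^^ N) v = v"
proof (induction m)
  case 0
  show ?case
  proof (intro ballI exI[of _ 1] conjI allI impI)
    fix g and v :: "'x list" assume "g \<in> G" "length v \<le> 0"
    thus "(g ^^ 1) v = v" using ta_len[OF G_ta, of g v] by simp
  qed simp
next
  case (Suc m)
  show ?case
  proof
    fix g assume g: "g \<in> G"
    obtain a where a: "a \<in> A" "\<forall>x. g [x] = a [x]" using level1[OF g] by blast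
    obtain p where p: "p > 0" "a ^^ p = id" using perA a by blast
    define h where "h = g ^^ p"
    have hG: "h \<in> G" unfolding h_def using G_pow g by blast
    have ht: "h \<in> tree_aut" using G_ta hG by blast
    have hx: "h [x] = [x]" for x unfolding h_def using powG_level1[OF g a] p by simp
    define F where "F = {x. sect h [x] \<notin> H}"
    have "F = (\<lambda>x. [x]) -` Eset H h (Suc 0)" unfolding F_def Eset_def by auto
    moreover have "finite (Eset H h (Suc 0))" using fin hG by blast
    moreover have "inj (\<lambda>x. [x])" by (simp add: inj_def)
    ultimately have finF: "finite F" using finite_vimageI by simp
    have "\<forall>x\<in>F. \<exists>N>0. \<forall>v. length v \<le> m \<longrightarrow> ((sect h [x]) ^^ N) v = v"
      using Suc sect_G[OF hG] by blast
    from bchoice[OF this] obtain Nf where Nf: "\<forall>x\<in>F. Nf x > 0 \<and> (\<forall>v. length v \<le> m \<longrightarrow> ((sect h [x]) ^^ Nf x) v = v)"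
      by blast
    define M where "M = e * prod Nf F"
    have M0: "M > 0" unfolding M_def using e Nf by (simp add: prod_pos)
    have hM: "(h ^^ M) v = v" if v: "length v \<le> Suc m" for v
    proof (cases v)
      case Nil thus ?thesis using ta_len[OF ta_funpow[OF ht], of M "[]"] by simp
    next
      case (Cons x w)
      have lw: "length w \<le> m" using v Cons by simp
      have eq: "(h ^^ M) ([x] @ w) = [x] @ (sect h [x] ^^ M) w" using fix_pow_app[OF ht hx] .
      have "(sect h [x] ^^ M) w = w"
      proof (cases "x \<in> F")
        case True
        have "M = Nf x * (e * prod Nf (F - {x}))"
          unfolding M_def using prod.remove[OF finF True, of Nf] by simp
        hence "sect h [x] ^^ M = (sect h [x] ^^ Nf x) ^^ (e * prod Nf (F - {x}))"
          by (simp add: funpow_mult)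
        moreover have "(sect h [x] ^^ Nf x) w = w" using Nf True lw by blast
        ultimately show ?thesis using funpow_fix[of "sect h [x] ^^ Nf x" w] by simp
      next
        case False
        hence "sect h [x] \<in> H" unfolding F_def by simp
        hence "sect h [x] ^^ e = id" using expH by blast
        moreover have "sect h [x] ^^ M = (sect h [x] ^^ e) ^^ prod Nf F"
          unfolding M_def by (simp add: funpow_mult)
        ultimately show ?thesis by simp
      qed
      thus ?thesis using eq Cons by simp
    qed
    show "\<exists>N>0. \<forall>v. length v \<le> Suc m \<longrightarrow> (g ^^ N) v = v"
    proof (intro exI[of _ "p * M"] conjI allI impI)
      show "p * M > 0" using p M0 by simp
      fix v :: "'x list" assume "length v \<le> Suc m"
      thus "(g ^^ (p * M)) v = v" using hM unfolding h_def by (simp add: funpow_mult)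
    qed
  qed
qed

end



lemma orbit_lemma:
  assumes g: "g \<in> tree_aut" and N: "N > 0" and gN: "(g ^^ N) v = v"
  shows "finite (orbitT g v) \<and> orbit_len g v > 0 \<and> (g ^^ orbit_len g v) v = v"
proof -
  define p where "p = (LEAST p. 0 < p \<and> (g ^^ p) v = v)"
  have pp: "0 < p \<and> (g ^^ p) v = v" unfolding p_def by (rule LeastI[of _ N]) (use N gN in simp)
  have pmin: "\<not> (0 < q \<and> (g ^^ q) v = v)" if "q < p" for q
    using not_less_Least[of q "\<lambda>p. 0 < p \<and> (g ^^ p) v = v"] that unfolding p_def by blast
  have gpt: "(g ^^ (p * t)) v = v" for t
    using funpow_fix[of "g ^^ p" v t] pp by (simp add: funpow_mult)
  have red: "(g ^^ (j + p * t)) v = (g ^^ j) v" for j t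
    using gpt[of t] by (simp add: funpow_add)
  have redmod: "(g ^^ n) v = (g ^^ (n mod p)) v" for n
  proof -
    have "(g ^^ (n mod p + p * (n div p))) v = (g ^^ (n mod p)) v" by (rule red)
    thus ?thesis by simp
  qed
  have inj_pow: "inj (g ^^ n)" for n using ta_bij[OF ta_funpow[OF g]] bij_is_inj by blast
  have pow_eq: "g [^]\<^bsub>AutT\<^esub> (n::nat) = g ^^ n" for n by (simp add: pow_AutT)
  have orb: "orbitT g v = (\<lambda>j. (g ^^ j) v) ` {..<p}"
  proof
    show "orbitT g v \<subseteq> (\<lambda>j. (g ^^ j) v) ` {..<p}"
    proof
      fix y assume "y \<in> orbitT g v"
      then obtain k :: int where y: "y = (g [^]\<^bsub>AutT\<^esub> k) v" unfolding orbitT_def by blast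
      show "y \<in> (\<lambda>j. (g ^^ j) v) ` {..<p}"
      proof (cases "k < 0")
        case False
        hence "y = (g ^^ nat k) v" using y by (simp add: int_pow_def2 pow_eq)
        thus ?thesis using redmod[of "nat k"] pp by auto
      next
        case True
        define n where "n = nat (-k)"
        have y2: "y = inv_into UNIV (g ^^ n) v"
          using y True inv_AutT[OF ta_funpow[OF g]] by (simp add: int_pow_def2 pow_eq n_def)
        define j where "j = (p - n mod p) mod p"
        have jp: "j < p" unfolding j_def using pp by simp
        have "\<exists>t. n + j = p * t"
        proof (cases "n mod p = 0")
          case True thus ?thesis unfolding j_def by (auto intro: exI[of _ "n div p"])
        next
          case False
          hence "j = p - n mod p" unfolding j_def using pp by simp
          moreover have "n mod p < p" using pp by simp
          ultimately have "n + j = p * (n div p) + p"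
            using div_mult_mod_eq[of n p] mult.commute[of "n div p" p] by linarith
          thus ?thesis by (auto intro: exI[of _ "n div p + 1"])
        qed
        then obtain t where t: "n + j = p * t" by blast
        have "g ^^ (p * t) = g ^^ n \<circ> g ^^ j" using t by (metis funpow_add)
        hence "(g ^^ n) ((g ^^ j) v) = v"
          using gpt[of t] by (metis comp_apply)
        hence "inv_into UNIV (g ^^ n) v = (g ^^ j) v" using inj_pow by (simp add: inv_f_eq)
        thus ?thesis using y2 jp by auto
      qed
    qed
  next
    show "(\<lambda>j. (g ^^ j) v) ` {..<p} \<subseteq> orbitT g v"
    proof
      fix y assume "y \<in> (\<lambda>j. (g ^^ j) v) ` {..<p}"
      then obtain j where "y = (g ^^ j) v" by blast
      hence "y = (g [^]\<^bsub>AutT\<^esub> (int j)) v" by (simp add: int_pow_int pow_eq)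
      thus "y \<in> orbitT g v" unfolding orbitT_def by blast
    qed
  qed
  have inj: "inj_on (\<lambda>j. (g ^^ j) v) {..<p}"
  proof -
    have *: "False" if ij: "i < j" "j < p" "(g ^^ i) v = (g ^^ j) v" for i j
    proof -
      have "j = i + (j - i)" using ij by simp
      hence "g ^^ j = g ^^ i \<circ> g ^^ (j - i)" by (metis funpow_add)
      hence "(g ^^ j) v = (g ^^ i) ((g ^^ (j - i)) v)" by simp
      hence "(g ^^ (j - i)) v = v" using ij(3) inj_pow[of i] by (metis injD)
      moreover have "j - i < p" "0 < j - i" using ij by auto
      ultimately show False using pmin[of "j - i"] by blast
    qed
    show ?thesis
    proof (rule inj_onI)
      fix i j assume "i \<in> {..<p}" "j \<in> {..<p}" "(g ^^ i) v = (g ^^ j) v"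
      thus "i = j" using * by (metis lessThan_iff linorder_neqE_nat)
    qed
  qed
  have card: "orbit_len g v = p" unfolding orbit_len_def orb using card_image[OF inj] by simp
  show ?thesis using orb card pp by simp
qed




context cs begin

lemma step2:
  assumes H: "subgroup H AutT" and e: "e > 0" and expH: "\<forall>h\<in>H. h ^^ e = id"
    and fin: "\<forall>g\<in>G. \<forall>m. finite (Eset H g m)"
    and g: "g \<in> G" and N: "N > 0" and gN: "\<forall>v. length v \<le> m \<longrightarrow> (g ^^ N) v = v"
    and hfo: "\<forall>v. length v = m \<longrightarrow> finite (orbitT g v) \<longrightarrow> finite_order (first_return_section g v)"
  shows "finite_order g"
proof -
  have gt: "g \<in> tree_aut" using G_ta g by blast
  have qex: "\<exists>q>0. \<forall>w. (g ^^ q) (v @ w) = v @ w" if v: "length v = m" for v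
  proof -
    have orb: "finite (orbitT g v) \<and> orbit_len g v > 0 \<and> (g ^^ orbit_len g v) v = v"
      using orbit_lemma[OF gt N] gN v by simp
    define l where "l = orbit_len g v"
    have "finite_order (first_return_section g v)" using hfo v orb by blast
    then obtain oo where o: "oo > 0" "(sect (g ^^ l) v) ^^ oo = id"
      unfolding finite_order_def first_return_section_def l_def by (auto simp: pow_AutT)
    have fixv: "(g ^^ l) v = v" using orb l_def by simp
    have "(g ^^ (l * oo)) (v @ w) = v @ w" for w
    proof -
      have "(g ^^ (l * oo)) (v @ w) = ((g ^^ l) ^^ oo) (v @ w)" by (simp add: funpow_mult)
      also have "\<dots> = v @ ((sect (g ^^ l) v) ^^ oo) w" using fix_pow_app[OF ta_funpow[OF gt] fixv] .
      finally show ?thesis using o by simp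
    qed
    moreover have "l * oo > 0" using orb o l_def by simp
    ultimately show ?thesis by blast
  qed
  define k where "k = g ^^ N"
  have kG: "k \<in> G" unfolding k_def using G_pow g by blast
  have kt: "k \<in> tree_aut" using G_ta kG by blast
  define F where "F = Eset H k m"
  have finF: "finite F" unfolding F_def using fin kG by blast
  have "\<forall>v\<in>F. \<exists>q>0. \<forall>w. (g ^^ q) (v @ w) = v @ w" using qex unfolding F_def Eset_def by blast
  from bchoice[OF this] obtain q where q: "\<forall>v\<in>F. q v > 0 \<and> (\<forall>w. (g ^^ q v) (v @ w) = v @ w)"
    by blast
  define M where "M = N * e * prod q F"
  have M0: "M > 0" unfolding M_def using N e q by (simp add: prod_pos)
  have allfix: "(g ^^ M) (v @ w) = v @ w" if v: "length v = m" for v w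
  proof (cases "v \<in> F")
    case True
    have "M = q v * (N * e * prod q (F - {v}))"
      unfolding M_def using prod.remove[OF finF True, of q] by simp
    hence "g ^^ M = (g ^^ q v) ^^ (N * e * prod q (F - {v}))" by (simp add: funpow_mult)
    moreover have "(g ^^ q v) (v @ w) = v @ w" using q True by blast
    ultimately show ?thesis using funpow_fix[of "g ^^ q v" "v @ w"] by simp
  next
    case False
    hence sH: "sect k v \<in> H" using v unfolding F_def Eset_def by simp
    have kv: "k v = v" unfolding k_def using gN v by simp
    have "(k ^^ e) (v @ w) = v @ (sect k v ^^ e) w" using fix_pow_app[OF kt kv] .
    hence ke: "(k ^^ e) (v @ w) = v @ w" using expH sH by simp
    have "g ^^ M = (k ^^ e) ^^ prod q F" unfolding M_def k_def by (simp add: funpow_mult mult.assoc)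
    thus ?thesis using funpow_fix[of "k ^^ e" "v @ w", OF ke] by simp
  qed
  have gM: "g ^^ M = id"
  proof
    fix u :: "'x list"
    show "(g ^^ M) u = id u"
    proof (cases "length u \<ge> m")
      case True
      have "(g ^^ M) (take m u @ drop m u) = take m u @ drop m u"
        using allfix[of "take m u" "drop m u"] True by simp
      thus ?thesis by simp
    next
      case False
      define r where "r = replicate (m - length u) z"
      have "length (u @ r) = m" using False unfolding r_def by simp
      hence "(g ^^ M) ((u @ r) @ []) = (u @ r) @ []" by (rule allfix)
      hence "(g ^^ M) (u @ r) = u @ r" by simp
      moreover have "take (length u) ((g ^^ M) (u @ r)) = (g ^^ M) u"
        using ta_take[OF ta_funpow[OF gt]] by blast
      ultimately show ?thesis by simp
    qed
  qed
  show ?thesis unfolding finite_order_def using M0 gM by (auto simp: pow_AutT)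
qed

end

theorem mainTheorem5:
  fixes z :: 'x and A B T :: "('x list \<Rightarrow> 'x list) set"
  assumes cs: "CS_data z A B"
    and perA: "periodic A"
    and fin: "finite_exponent A \<or> finite_support z B"
    and T_sub: "T \<subseteq> CS_group A B"
    and T_fin: "\<forall>t\<in>T. finite_order t"
    and hyp: "\<forall>g \<in> CS_group A B - A. \<exists>m::nat. \<forall>v. length v = m \<longrightarrow> finite (orbitT g v) \<longrightarrow>
               (syl A B (first_return_section g v) < syl A B g \<or> first_return_section g v \<in> T)"
  shows "periodic (CS_group A B)"
proof -
  interpret cs z A B using cs by unfold_locales
  have perA': "\<forall>a\<in>A. \<exists>p>0. a ^^ p = id"
    using perA unfolding periodic_def finite_order_def by (simp add: pow_AutT)
  have "\<exists>H e. subgroup H AutT \<and> e > 0 \<and> (\<forall>h\<in>H. h ^^ e = id) \<and> (\<forall>g\<in>G. \<forall>m. finite (Eset H g m))"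
    using fin
  proof
    assume "finite_exponent A"
    then obtain n where n: "n > 0" "\<forall>a\<in>A. a ^^ n = id"
      unfolding finite_exponent_def by (auto simp: pow_AutT)
    have "\<forall>b\<in>B. \<forall>m. finite (Eset A b m)"
    proof (intro ballI allI)
      fix b m assume b: "b \<in> B"
      have "Eset A b m \<subseteq> {replicate m z}"
        using B_sect[OF b] unfolding Eset_def by auto
      thus "finite (Eset A b m)" using finite_subset by blast
    qed
    hence "\<forall>g\<in>G. \<forall>m. finite (Eset A g m)" using good_closed[OF subA] by blast
    thus ?thesis using subA n by blast
  next
    assume fs: "finite_support z B"
    have sH: "subgroup {id} AutT" using group.triv_subgroup[OF group_AutT] by simp
    have "\<forall>b\<in>B. \<forall>m. finite (Eset {id} b m)"
    proof (intro ballI allI)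
      fix b m assume b: "b \<in> B"
      have "Eset {id} b m \<subseteq> {[]} \<union> (\<lambda>x. replicate (m - 1) z @ [x]) ` {x. sect b [x] \<noteq> id}"
      proof
        fix v assume "v \<in> Eset {id} b m"
        hence v: "length v = m" "sect b v \<noteq> id" unfolding Eset_def by auto
        from B_sect_fs[OF b v(2)] show "v \<in> {[]} \<union> (\<lambda>x. replicate (m - 1) z @ [x]) ` {x. sect b [x] \<noteq> id}"
        proof
          assume "v = []" thus ?thesis by simp
        next
          assume "\<exists>k x. v = replicate k z @ [x] \<and> sect b [x] \<noteq> id"
          then obtain k x where kx: "v = replicate k z @ [x]" "sect b [x] \<noteq> id" by blast
          hence "k = m - 1" using v(1) by simp
          thus ?thesis using kx by blast
        qed
      qed
      moreover have "finite {x. sect b [x] \<noteq> id}" using fs b unfolding finite_support_def by blast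
      ultimately show "finite (Eset {id} b m)" using finite_subset by blast
    qed
    hence "\<forall>g\<in>G. \<forall>m. finite (Eset {id} g m)" using good_closed[OF sH] by blast
    thus ?thesis using sH by (intro exI[of _ "{id}"] exI[of _ "1::nat"]) auto
  qed
  then obtain H e where H: "subgroup H AutT" and e: "e > 0" and expH: "\<forall>h\<in>H. h ^^ e = id"
    and finH: "\<forall>g\<in>G. \<forall>m. finite (Eset H g m)" by blast
  have main: "\<forall>g\<in>G. syl A B g = n \<longrightarrow> finite_order g" for n
  proof (induction n rule: less_induct)
    case (less n)
    show ?case
    proof (intro ballI impI)
      fix g assume g: "g \<in> G" and sg: "syl A B g = n"
      show "finite_order g"
      proof (cases "g \<in> A")
        case True thus ?thesis using perA unfolding periodic_def by blast
      next
        case False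
        then obtain m where m: "\<forall>v. length v = m \<longrightarrow> finite (orbitT g v) \<longrightarrow>
               (syl A B (first_return_section g v) < syl A B g \<or> first_return_section g v \<in> T)"
          using hyp g by blast
        obtain N where N: "N > 0" "\<forall>v. length v \<le> m \<longrightarrow> (g ^^ N) v = v"
          using step1[OF H e expH finH perA', of m] g by blast
        have hfo: "\<forall>v. length v = m \<longrightarrow> finite (orbitT g v) \<longrightarrow> finite_order (first_return_section g v)"
        proof (intro allI impI)
          fix v :: "'x list" assume v: "length v = m" "finite (orbitT g v)"
          have rG: "first_return_section g v \<in> G"
            unfolding first_return_section_def pow_AutT using sect_G G_pow g by blast
          from m v show "finite_order (first_return_section g v)"
            using less sg rG T_fin by blast
        qed
        show ?thesis using step2[OF H e expH finH g N hfo] .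
      qed
    qed
  qed
  show ?thesis unfolding periodic_def using main by blast
qed


end
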